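(* For each $m\in\mathbb Z_{\ge1}$, \[\sum_{\ell=0}^{\lfloor m/2\rfloor}\binom{2\ell}{\ell}\sum_{1\le i_1<\cdots<i_{m-2\ell}\le m}\ \prod_{j=1}^{m-2\ell}(x_{i_j}+x_{i_j}^{-1})=\sum_{j=0}^{\lfloor m/2\rfloor}\chi^{\operatorname{Sp}(2m)}_{(1^{m-2j})},\] and \[\prod_{i=1}^m(x_i+x_i^{-1})=\sum_{j=0}^{\lfloor m/2\rfloor}(-1)^j\chi^{\operatorname{Sp}(2m)}_{(1^{m-2j})}.\]
   Context: $\chi_\lambda^{\operatorname{Sp}(2m)}=\chi_\lambda^{\operatorname{Sp}(2m)}(x_1^{\pm1},\dots,x_m^{\pm1})$ is the character of the irreducible representation of $\operatorname{Sp}(2m,\mathbb C)$ with highest weight the partition $\lambda$, evaluated at a torus element with eigenvalues $x_1^{\pm1},\dots,x_m^{\pm1}$; $(1^k)$ is the partition with $k$ parts equal to $1$, and $\chi_{(1^0)}=1$. The inner sum over $1\le i_1<\cdots<i_k\le m$ is set to be $1$ when $k=0$. *)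

theory Defs
  imports Complex_Main "HOL-Combinatorics.Permutations"
begin

text \<open>Weyl numerator for Sp(2m): the m x m determinant
  det( x_j^(lam_i + m - i + 1) - x_j^(-(lam_i + m - i + 1)) )_{1 <= i,j <= m},
  written out via the Leibniz formula.  Here lam :: nat => nat gives the parts
  lam_1 >= ... >= lam_m of a partition with at most m parts.\<close>
definition sp_weyl_num :: "nat \<Rightarrow> (nat \<Rightarrow> nat) \<Rightarrow> (nat \<Rightarrow> complex) \<Rightarrow> complex" where
  "sp_weyl_num m lam x =
     (\<Sum>p | p permutes {1..m}. of_int (sign p) *
        (\<Prod>i\<in>{1..m}. x (p i) ^ (lam i + m - i + 1) - inverse (x (p i)) ^ (lam i + m - i + 1)))"

text \<open>Character of the irreducible Sp(2m,C)-representation of highest weight lam,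
  at the torus element with eigenvalues x_1^{+-1},...,x_m^{+-1}
  (Weyl character formula: numerator for lam divided by numerator for the empty partition).\<close>
definition sp_char :: "nat \<Rightarrow> (nat \<Rightarrow> nat) \<Rightarrow> (nat \<Rightarrow> complex) \<Rightarrow> complex" where
  "sp_char m lam x = sp_weyl_num m lam x / sp_weyl_num m (\<lambda>_. 0) x"

definition one_pow :: "nat \<Rightarrow> nat \<Rightarrow> nat" where
  "one_pow k i = (if 1 \<le> i \<and> i \<le> k then 1 else 0)"

end

theory Submission
  imports Defs
begin

definition alt :: "nat \<Rightarrow> (nat \<Rightarrow> nat \<Rightarrow> complex) \<Rightarrow> complex" where
  "alt m R = (\<Sum>p | p permutes {1..m}. of_int (sign p) * (\<Prod>i\<in>{1..m}. R i (p i)))"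

lemma alt_cong:
  assumes "\<And>i j. i \<in> {1..m} \<Longrightarrow> j \<in> {1..m} \<Longrightarrow> R i j = R' i j"
  shows "alt m R = alt m R'"
  unfolding alt_def
proof (rule sum.cong[OF refl])
  fix p assume p: "p \<in> {p. p permutes {1..m}}"
  have "(\<Prod>i\<in>{1..m}. R i (p i)) = (\<Prod>i\<in>{1..m}. R' i (p i))"
  proof (rule prod.cong[OF refl])
    fix i assume "i \<in> {1..m}"
    moreover have "p i \<in> {1..m}" using p \<open>i \<in> {1..m}\<close> permutes_in_image[of p "{1..m}" i] by simp
    ultimately show "R i (p i) = R' i (p i)" using assms by simp
  qed
  then show "of_int (sign p) * (\<Prod>i\<in>{1..m}. R i (p i)) = of_int (sign p) * (\<Prod>i\<in>{1..m}. R' i (p i))" by simp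
qed

lemma alt_permute:
  assumes s: "s permutes {1..m}"
  shows "alt m (\<lambda>i. R (s i)) = of_int (sign s) * alt m R"
proof -
  have fin: "finite {1..m}" by simp
  have ps: "permutation s" using s fin permutation_permutes by blast
  have "alt m (\<lambda>i. R (s i)) = (\<Sum>p | p permutes {1..m}. of_int (sign p) * (\<Prod>i\<in>{1..m}. R i ((p \<circ> inv s) i)))"
    unfolding alt_def
  proof (rule sum.cong[OF refl])
    fix p assume "p \<in> {p. p permutes {1..m}}"
    have "(\<Prod>i\<in>{1..m}. R i ((p \<circ> inv s) i)) = (\<Prod>i\<in>{1..m}. R (s i) ((p \<circ> inv s) (s i)))"
      using prod.permute[OF s, of "\<lambda>i. R i ((p \<circ> inv s) i)"] by (simp add: o_def)
    also have "\<dots> = (\<Prod>i\<in>{1..m}. R (s i) (p i))"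
      using permutes_inverses(2)[OF s] by simp
    finally show "of_int (sign p) * (\<Prod>i\<in>{1..m}. R (s i) (p i)) = of_int (sign p) * (\<Prod>i\<in>{1..m}. R i ((p \<circ> inv s) i))" by simp
  qed
  also have "\<dots> = (\<Sum>p | p permutes {1..m}. of_int (sign (p \<circ> s)) * (\<Prod>i\<in>{1..m}. R i ((p \<circ> s \<circ> inv s) i)))"
    by (rule sum_permutations_compose_right[OF s])
  also have "\<dots> = (\<Sum>p | p permutes {1..m}. of_int (sign s) * (of_int (sign p) * (\<Prod>i\<in>{1..m}. R i (p i))))"
  proof (rule sum.cong[OF refl])
    fix p assume "p \<in> {p. p permutes {1..m}}"
    then have pp: "permutation p" using fin permutation_permutes by blast
    have "p \<circ> s \<circ> inv s = p" using permutes_inv_o(1)[OF s] by (simp add: o_assoc[symmetric])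
    then show "of_int (sign (p \<circ> s)) * (\<Prod>i\<in>{1..m}. R i ((p \<circ> s \<circ> inv s) i)) = of_int (sign s) * (of_int (sign p) * (\<Prod>i\<in>{1..m}. R i (p i)))"
      by (simp add: sign_compose[OF pp ps])
  qed
  also have "\<dots> = of_int (sign s) * alt m R" unfolding alt_def by (simp add: sum_distrib_left)
  finally show ?thesis .
qed

lemma alt_dup:
  assumes "r \<in> {1..m}" "s \<in> {1..m}" "r \<noteq> s" "\<And>j. j \<in> {1..m} \<Longrightarrow> R r j = R s j"
  shows "alt m R = 0"
proof -
  have "alt m R = alt m (\<lambda>i. R (transpose r s i))"
    by (rule alt_cong) (use assms in \<open>auto simp: transpose_def\<close>)
  also have "\<dots> = - alt m R"
    using alt_permute[OF permutes_swap_id[OF assms(1,2)]] assms(3) by (simp add: sign_swap_id)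
  finally show ?thesis by simp
qed

lemma alt_linear:
  assumes "finite Q" "r \<in> {1..m}" "\<And>j. j \<in> {1..m} \<Longrightarrow> R r j = (\<Sum>q\<in>Q. c q * V q j)"
  shows "alt m R = (\<Sum>q\<in>Q. c q * alt m (R(r := V q)))"
proof -
  have "alt m R = (\<Sum>p | p permutes {1..m}. \<Sum>q\<in>Q. c q * (of_int (sign p) * (\<Prod>i\<in>{1..m}. (R(r := V q)) i (p i))))"
    unfolding alt_def
  proof (rule sum.cong[OF refl])
    fix p assume "p \<in> {p. p permutes {1..m}}"
    then have pr: "p r \<in> {1..m}" using assms(2) permutes_in_image[of p "{1..m}" r] by simp
    have e1: "(\<Prod>i\<in>{1..m}. R i (p i)) = R r (p r) * (\<Prod>i\<in>{1..m}-{r}. R i (p i))"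
      by (rule prod.remove) (use assms(2) in auto)
    have e2: "(\<Prod>i\<in>{1..m}. (R(r := V q)) i (p i)) = V q (p r) * (\<Prod>i\<in>{1..m}-{r}. R i (p i))" for q
    proof -
      have "(\<Prod>i\<in>{1..m}. (R(r := V q)) i (p i)) = (R(r := V q)) r (p r) * (\<Prod>i\<in>{1..m}-{r}. (R(r := V q)) i (p i))"
        by (rule prod.remove) (use assms(2) in auto)
      also have "(\<Prod>i\<in>{1..m}-{r}. (R(r := V q)) i (p i)) = (\<Prod>i\<in>{1..m}-{r}. R i (p i))"
        by (rule prod.cong) auto
      finally show ?thesis by simp
    qed
    show "of_int (sign p) * (\<Prod>i\<in>{1..m}. R i (p i)) = (\<Sum>q\<in>Q. c q * (of_int (sign p) * (\<Prod>i\<in>{1..m}. (R(r := V q)) i (p i))))"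
      unfolding e1 e2 assms(3)[OF pr] sum_distrib_left sum_distrib_right
      by (rule sum.cong[OF refl]) (simp only: ac_simps)
  qed
  also have "\<dots> = (\<Sum>q\<in>Q. c q * alt m (R(r := V q)))"
    unfolding alt_def sum_distrib_left by (rule sum.swap)
  finally show ?thesis .
qed

lemma alt_zero_row:
  assumes "r \<in> {1..m}" "\<And>j. j \<in> {1..m} \<Longrightarrow> R r j = 0"
  shows "alt m R = 0"
  using alt_linear[of "{}" r m R] assms by simp

definition fz :: "complex \<Rightarrow> int \<Rightarrow> complex" where
  "fz z t = z powi t - z powi (-t)"

lemma powi_step:
  fixes z :: complex
  assumes "z \<noteq> 0"
  shows "(z - inverse z) * z powi e = z powi (e + 1) - z powi (e - 1)"
proof -
  have "z powi (e + 1) = z powi e * z" using assms power_int_add[of z e 1] by simp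
  moreover have "z powi (e - 1) = z powi e * inverse z" using assms power_int_add[of z e "-1"] by (simp add: power_int_minus)
  ultimately show ?thesis using assms by (simp add: right_diff_distrib mult.commute)
qed

lemma pow_rel:
  assumes z: "z \<noteq> 0"
  shows "(z - inverse z) * (z + inverse z)^n = (\<Sum>i\<in>{0..n}. of_nat (n choose i) * fz z (int n + 1 - 2*int i))"
proof -
  have e1: "(z + inverse z)^n = (\<Sum>i\<in>{0..n}. of_nat (n choose i) * z powi (2 * int i - int n))"
    unfolding binomial_ring atLeast0AtMost[symmetric]
  proof (rule sum.cong[OF refl])
    fix i assume i: "i \<in> {0..n}"
    have "z powi (2 * int i - int n) = z powi (int i) * z powi (- int (n - i))"
    proof -
      have ex: "2 * int i - int n = int i + (- int (n - i))" using i by (simp add: of_nat_diff)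
      show ?thesis unfolding ex by (rule power_int_add[OF disjI1[OF z]])
    qed
    moreover have "z powi (- int (n - i)) = inverse z ^ (n - i)"
      by (metis power_int_minus power_int_of_nat power_inverse)
    ultimately show "of_nat (n choose i) * z ^ i * inverse z ^ (n - i) = of_nat (n choose i) * z powi (2 * int i - int n)"
      by (simp only: power_int_of_nat mult.assoc)
  qed
  have "(z - inverse z) * (z + inverse z)^n = (\<Sum>i\<in>{0..n}. of_nat (n choose i) * (z powi (2 * int i - int n + 1) - z powi (2 * int i - int n - 1)))"
    unfolding e1 sum_distrib_left
  proof (rule sum.cong[OF refl])
    fix i
    have "(z - inverse z) * (of_nat (n choose i) * z powi (2 * int i - int n)) = of_nat (n choose i) * ((z - inverse z) * z powi (2 * int i - int n))"
      by (simp only: mult.left_commute)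
    then show "(z - inverse z) * (of_nat (n choose i) * z powi (2 * int i - int n)) = of_nat (n choose i) * (z powi (2 * int i - int n + 1) - z powi (2 * int i - int n - 1))"
      by (simp only: powi_step[OF z])
  qed
  also have "\<dots> = (\<Sum>i\<in>{0..n}. of_nat (n choose i) * z powi (2 * int i - int n + 1)) - (\<Sum>i\<in>{0..n}. of_nat (n choose i) * z powi (2 * int i - int n - 1))"
    by (simp only: right_diff_distrib sum_subtractf)
  also have "(\<Sum>i\<in>{0..n}. of_nat (n choose i) * z powi (2 * int i - int n + 1)) = (\<Sum>i\<in>{0..n}. of_nat (n choose i) * z powi (int n + 1 - 2 * int i))"
  proof -
    have "(\<Sum>i\<in>{0..n}. of_nat (n choose i) * z powi (2 * int i - int n + 1)) = (\<Sum>i\<in>{0..n}. of_nat (n choose (n + 0 - i)) * z powi (2 * int (n + 0 - i) - int n + 1))"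
      by (rule sum.atLeastAtMost_rev)
    also have "\<dots> = (\<Sum>i\<in>{0..n}. of_nat (n choose i) * z powi (int n + 1 - 2 * int i))"
    proof (rule sum.cong[OF refl])
      fix i assume i: "i \<in> {0..n}"
      then have "n choose (n + 0 - i) = n choose i" using binomial_symmetric[of i n] by simp
      moreover have "2 * int (n + 0 - i) - int n + 1 = int n + 1 - 2 * int i" using i by (simp add: of_nat_diff)
      ultimately show "of_nat (n choose (n + 0 - i)) * z powi (2 * int (n + 0 - i) - int n + 1) = of_nat (n choose i) * z powi (int n + 1 - 2 * int i)" by (simp only:)
    qed
    finally show ?thesis .
  qed
  also have "(\<Sum>i\<in>{0..n}. of_nat (n choose i) * z powi (2 * int i - int n - 1)) = (\<Sum>i\<in>{0..n}. of_nat (n choose i) * z powi (- (int n + 1 - 2 * int i)))"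
    by (rule sum.cong) (simp_all add: algebra_simps)
  finally show ?thesis unfolding fz_def by (simp only: right_diff_distrib sum_subtractf)
qed

definition cyc :: "nat \<Rightarrow> nat \<Rightarrow> nat" where
  "cyc k i = (if i = 1 then k else if 2 \<le> i \<and> i \<le> k then i - 1 else i)"

lemma cyc_props: "1 \<le> k \<Longrightarrow> cyc k permutes {1..k} \<and> sign (cyc k) = (-1)^(k-1)"
proof (induction k rule: dec_induct)
  case base
  have "cyc 1 = id" by (auto simp: cyc_def fun_eq_iff)
  then show ?case unfolding \<open>cyc 1 = id\<close> by (simp add: id_def)
next
  case (step k)
  have eq: "cyc (Suc k) = transpose k (Suc k) \<circ> cyc k"
    using step(1) by (auto simp: cyc_def fun_eq_iff transpose_def)
  have p1: "cyc k permutes {1..Suc k}" using step(3) permutes_subset by fastforce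
  have p2: "transpose k (Suc k) permutes {1..Suc k}" using step(1) by (intro permutes_swap_id) auto
  have "permutation (cyc k)" using p1 permutation_permutes by blast
  moreover have "permutation (transpose k (Suc k))" using p2 permutation_permutes by blast
  ultimately have sgn: "sign (cyc (Suc k)) = - sign (cyc k)"
    unfolding eq by (simp add: sign_compose sign_swap_id)
  have A: "cyc (Suc k) permutes {1..Suc k}" unfolding eq by (rule permutes_compose[OF p1 p2])
  have B: "sign (cyc (Suc k)) = (-1)^(Suc k - 1)" using sgn step(3) step(1) by (cases k) auto
  show ?case using A B by blast
qed

definition yv :: "(nat \<Rightarrow> complex) \<Rightarrow> nat \<Rightarrow> complex" where
  "yv x l = x l + inverse (x l)"
definition Q0 :: "nat \<Rightarrow> (nat set \<times> nat) set" where
  "Q0 m = Sigma (Pow {1..m}) (\<lambda>S. {0..m - card S})"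
definition wt :: "(nat \<Rightarrow> complex) \<Rightarrow> nat \<Rightarrow> nat set \<times> nat \<Rightarrow> complex" where
  "wt x m q = (\<Prod>l\<in>fst q. - yv x l) * of_nat ((m - card (fst q)) choose (snd q))"
definition tt :: "nat \<Rightarrow> nat set \<times> nat \<Rightarrow> int" where
  "tt m q = int (m - card (fst q)) + 1 - 2 * int (snd q)"
definition dl :: "int \<Rightarrow> int \<Rightarrow> complex" where
  "dl t K = (if t = K then 1 else 0) - (if t = -K then 1 else 0)"

lemma finite_Q0: "finite (Q0 m)"
  unfolding Q0_def by (intro finite_SigmaI) auto

lemma rel:
  assumes j: "j \<in> {1..m}" and xj: "x j \<noteq> 0"
  shows "(\<Sum>q\<in>Q0 m. wt x m q * fz (x j) (tt m q)) = 0"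
proof -
  have "(\<Sum>q\<in>Q0 m. wt x m q * fz (x j) (tt m q))
      = (\<Sum>S\<in>Pow {1..m}. \<Sum>i\<in>{0..m - card S}. wt x m (S,i) * fz (x j) (tt m (S,i)))"
    unfolding Q0_def by (subst sum.Sigma) auto
  also have "\<dots> = (\<Sum>S\<in>Pow {1..m}. (\<Prod>l\<in>S. - yv x l) * ((x j - inverse (x j)) * yv x j ^ (m - card S)))"
  proof (rule sum.cong[OF refl])
    fix S
    show "(\<Sum>i\<in>{0..m - card S}. wt x m (S,i) * fz (x j) (tt m (S,i))) = (\<Prod>l\<in>S. - yv x l) * ((x j - inverse (x j)) * yv x j ^ (m - card S))"
      unfolding pow_rel[OF xj] yv_def wt_def tt_def by (simp add: sum_distrib_left mult.assoc)
  qed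
  also have "\<dots> = (x j - inverse (x j)) * (\<Sum>S\<in>Pow {1..m}. (\<Prod>l\<in>S. - yv x l) * (\<Prod>l\<in>{1..m} - S. yv x j))"
  proof -
    have "\<And>S. S \<in> Pow {1..m} \<Longrightarrow> (\<Prod>l\<in>{1..m} - S. yv x j) = yv x j ^ (m - card S)"
      by (simp add: card_Diff_subset finite_subset)
    then show ?thesis by (simp add: sum_distrib_left mult_ac)
  qed
  also have "\<dots> = (x j - inverse (x j)) * (\<Prod>l\<in>{1..m}. - yv x l + yv x j)"
    by (subst prod_add) auto
  also have "(\<Prod>l\<in>{1..m}. - yv x l + yv x j) = 0"
    using j by (intro prod_zero) auto
  finally show ?thesis by simp
qed

lemma fz_nat: "fz z (int a) = z ^ a - inverse z ^ a"
  unfolding fz_def by (metis power_int_minus power_int_of_nat power_inverse)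

lemma fz_neg: "fz z (- t) = - fz z t"
  unfolding fz_def by simp

lemma fz_zero: "fz z 0 = 0"
  unfolding fz_def by simp

definition rowk :: "(nat \<Rightarrow> complex) \<Rightarrow> nat \<Rightarrow> nat \<Rightarrow> nat \<Rightarrow> nat \<Rightarrow> complex" where
  "rowk x m k i j = x j ^ (one_pow k i + m - i + 1) - inverse (x j) ^ (one_pow k i + m - i + 1)"

definition fr :: "(nat \<Rightarrow> complex) \<Rightarrow> nat \<Rightarrow> nat \<Rightarrow> complex" where
  "fr x a j = x j ^ a - inverse (x j) ^ a"

lemma weyl_alt: "sp_weyl_num m (one_pow k) x = alt m (rowk x m k)"
  unfolding sp_weyl_num_def alt_def rowk_def ..

lemma one_pow0: "one_pow 0 = (\<lambda>_. 0)"
  by (auto simp: one_pow_def fun_eq_iff)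

lemma weyl_alt0: "sp_weyl_num m (\<lambda>_. 0) x = alt m (rowk x m 0)"
  using weyl_alt[of m 0 x] by (simp add: one_pow0)

lemma A1:
  assumes "1 \<le> k" "k \<le> m" "1 \<le> a" "a \<le> m" "a \<noteq> m + 1 - k"
  shows "alt m ((rowk x m k)(1 := fr x a)) = 0"
proof (cases "a > m + 1 - k")
  case True
  define r where "r = m + 2 - a"
  have r: "2 \<le> r" "r \<le> k" using assms True by (auto simp: r_def)
  show ?thesis
  proof (rule alt_dup[of 1 m r])
    show "1 \<in> {1..m}" "r \<in> {1..m}" "1 \<noteq> r" using r assms by auto
    fix j assume "j \<in> {1..m}"
    show "((rowk x m k)(1 := fr x a)) 1 j = ((rowk x m k)(1 := fr x a)) r j"
      using r assms by (simp add: rowk_def fr_def one_pow_def r_def)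
  qed
next
  case False
  then have F: "a < m + 1 - k" using assms by auto
  define r where "r = m + 1 - a"
  have r: "k < r" "r \<le> m" "2 \<le> r" using assms F by (auto simp: r_def)
  show ?thesis
  proof (rule alt_dup[of 1 m r])
    show "1 \<in> {1..m}" "r \<in> {1..m}" "1 \<noteq> r" using r assms by auto
    fix j assume "j \<in> {1..m}"
    show "((rowk x m k)(1 := fr x a)) 1 j = ((rowk x m k)(1 := fr x a)) r j"
      using r assms by (simp add: rowk_def fr_def one_pow_def r_def)
  qed
qed

lemma A2:
  assumes "1 \<le> k" "k \<le> m"
  shows "alt m ((rowk x m k)(1 := fr x (m + 1 - k))) = (-1)^(k-1) * alt m (rowk x m 0)"
proof -
  have cp: "cyc k permutes {1..m}" "sign (cyc k) = (-1)^(k-1)"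
    using cyc_props[OF assms(1)] permutes_subset[of "cyc k" "{1..k}" "{1..m}"] assms by auto
  have "alt m ((rowk x m k)(1 := fr x (m + 1 - k))) = alt m (\<lambda>i. rowk x m 0 (cyc k i))"
  proof (rule alt_cong)
    fix i j assume i: "i \<in> {1..m}" and "j \<in> {1..m}"
    show "((rowk x m k)(1 := fr x (m + 1 - k))) i j = rowk x m 0 (cyc k i) j"
      using i assms by (auto simp: rowk_def fr_def one_pow_def cyc_def Suc_diff_le)
  qed
  also have "\<dots> = (-1)^(k-1) * alt m (rowk x m 0)"
    using alt_permute[OF cp(1)] cp(2) by simp
  finally show ?thesis .
qed

lemma alt_scale:
  assumes "r \<in> {1..m}"
  shows "alt m (R(r := (\<lambda>j. c * V j))) = c * alt m (R(r := V))"
  using alt_linear[of "{()}" r m "R(r := (\<lambda>j. c * V j))" "\<lambda>_. c" "\<lambda>_. V"] assms by simp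

lemma A3:
  assumes k: "1 \<le> k" "k \<le> m" and t: "\<bar>t\<bar> \<le> int m"
  shows "alt m ((rowk x m k)(1 := (\<lambda>j. fz (x j) t))) = dl t (int (m + 1 - k)) * (-1)^(k-1) * alt m (rowk x m 0)"
proof -
  have m1: "1 \<in> {1..m}" using k by auto
  consider "t = 0" | "t > 0" | "t < 0" by linarith
  then show ?thesis
  proof cases
    case 1
    then show ?thesis using alt_zero_row[OF m1] k by (simp add: fz_zero dl_def)
  next
    case 2
    define a where "a = nat t"
    have a: "t = int a" "1 \<le> a" "a \<le> m" using 2 t by (auto simp: a_def)
    have row: "(\<lambda>j. fz (x j) t) = fr x a" using a by (simp add: fun_eq_iff fz_nat fr_def)
    show ?thesis
    proof (cases "a = m + 1 - k")
      case True
      then show ?thesis unfolding row using A2[OF k, of x] a k by (simp add: dl_def of_nat_diff)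
    next
      case False
      have "int a \<noteq> 1 + int m - int k" using False k by arith
      then show ?thesis unfolding row using A1[OF k a(2,3) False, of x] a k by (simp add: dl_def of_nat_diff)
    qed
  next
    case 3
    define a where "a = nat (- t)"
    have a: "t = - int a" "1 \<le> a" "a \<le> m" using 3 t by (auto simp: a_def)
    have row: "(\<lambda>j. fz (x j) t) = (\<lambda>j. (-1) * fr x a j)" using a by (simp add: fun_eq_iff fz_nat fz_neg fr_def)
    show ?thesis
    proof (cases "a = m + 1 - k")
      case True
      then show ?thesis unfolding row alt_scale[OF m1] using A2[OF k, of x] a k by (simp add: dl_def of_nat_diff)
    next
      case False
      have "int a \<noteq> 1 + int m - int k" using False k by arith
      then show ?thesis unfolding row alt_scale[OF m1] using A1[OF k a(2,3) False, of x] a k by (simp add: dl_def of_nat_diff)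
    qed
  qed
qed

lemma J_iff1:
  fixes n i j :: nat
  shows "(int n + 1 - 2 * int i = 2 * int j + 1) \<longleftrightarrow> (even n \<and> i \<le> n div 2 \<and> j = n div 2 - i)"
  by presburger

lemma J_iff2:
  fixes n i j :: nat
  shows "(int n + 1 - 2 * int i = - (2 * int j + 1)) \<longleftrightarrow> (even n \<and> n div 2 < i \<and> j = i - n div 2 - 1)"
  by presburger

lemma Jsum:
  fixes g :: "nat \<Rightarrow> complex"
  assumes "n \<le> m" "i \<le> n"
  shows "(\<Sum>j\<in>{0..m div 2}. g j * dl (int n + 1 - 2 * int i) (2 * int j + 1))
       = (if even n then (if i \<le> n div 2 then g (n div 2 - i) else - g (i - n div 2 - 1)) else 0)"
proof -
  have "(\<Sum>j\<in>{0..m div 2}. g j * dl (int n + 1 - 2 * int i) (2 * int j + 1))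
      = (\<Sum>j\<in>{0..m div 2}. (if j = n div 2 - i then (if even n \<and> i \<le> n div 2 then g j else 0) else 0)
          - (if j = i - n div 2 - 1 then (if even n \<and> n div 2 < i then g j else 0) else 0))"
  proof (rule sum.cong[OF refl])
    fix j
    show "g j * dl (int n + 1 - 2 * int i) (2 * int j + 1) = (if j = n div 2 - i then (if even n \<and> i \<le> n div 2 then g j else 0) else 0)
          - (if j = i - n div 2 - 1 then (if even n \<and> n div 2 < i then g j else 0) else 0)"
      unfolding dl_def J_iff1 J_iff2 by auto
  qed
  also have "\<dots> = (if even n \<and> i \<le> n div 2 then g (n div 2 - i) else 0) - (if even n \<and> n div 2 < i then g (i - n div 2 - 1) else 0)"
  proof -
    have a: "n div 2 - i \<in> {0..m div 2}" using assms by auto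
    have b: "even n \<and> n div 2 < i \<Longrightarrow> i - n div 2 - 1 \<in> {0..m div 2}" using assms by auto
    show ?thesis unfolding sum_subtractf using a b by (auto simp: sum.delta)
  qed
  also have "\<dots> = (if even n then (if i \<le> n div 2 then g (n div 2 - i) else - g (i - n div 2 - 1)) else 0)"
    by auto
  finally show ?thesis .
qed

lemma choose_rev: "i \<le> n \<Longrightarrow> n choose (n - i) = n choose i"
  by (metis binomial_symmetric diff_diff_cancel diff_le_self)

lemma B1:
  assumes "even n"
  shows "(\<Sum>i\<in>{0..n}. of_nat (n choose i) * (if i \<le> n div 2 then 1 else -1)) = (of_nat (n choose (n div 2)) :: complex)"
proof -
  obtain h where h: "n = h + h" using assms by (metis evenE mult_2)
  have hd: "n div 2 = h" using h by simp
  have split: "(\<Sum>i\<in>{0..h + h}. f i) = (\<Sum>i\<in>{0..h}. f i) + (\<Sum>i\<in>{h+1..h + h}. f i)" for f :: "nat \<Rightarrow> complex"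
    by (rule sum.ub_add_nat) simp
  have rev: "(\<Sum>i\<in>{h+1..h + h}. of_nat (n choose i)) = (\<Sum>i\<in>{..<h}. (of_nat (n choose i) :: complex))"
    by (rule sum.reindex_bij_witness[of _ "\<lambda>i. n - i" "\<lambda>i. n - i"]) (auto simp: h choose_rev)
  have lo: "(\<Sum>i\<in>{0..h}. (of_nat (n choose i) :: complex)) = (\<Sum>i\<in>{..<h}. of_nat (n choose i)) + of_nat (n choose h)"
    by (simp add: atLeast0AtMost lessThan_Suc_atMost[symmetric])
  have "(\<Sum>i\<in>{0..n}. of_nat (n choose i) * (if i \<le> n div 2 then 1 else -1))
      = (\<Sum>i\<in>{0..h}. (of_nat (n choose i) :: complex)) - (\<Sum>i\<in>{h+1..h + h}. of_nat (n choose i))"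
  proof -
    have "(\<Sum>i\<in>{0..n}. of_nat (n choose i) * (if i \<le> n div 2 then 1 else -1))
       = (\<Sum>i\<in>{0..h}. of_nat (n choose i) * (if i \<le> h then 1 else -1)) + (\<Sum>i\<in>{h+1..h + h}. (of_nat (n choose i) :: complex) * (if i \<le> h then 1 else -1))"
      unfolding hd using split h by simp
    also have "(\<Sum>i\<in>{0..h}. of_nat (n choose i) * (if i \<le> h then 1 else -1)) = (\<Sum>i\<in>{0..h}. (of_nat (n choose i) :: complex))"
      by (rule sum.cong) auto
    also have "(\<Sum>i\<in>{h+1..h + h}. (of_nat (n choose i) :: complex) * (if i \<le> h then 1 else -1)) = - (\<Sum>i\<in>{h+1..h + h}. of_nat (n choose i))"
      by (simp add: sum_negf[symmetric])
    finally show ?thesis by simp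
  qed
  then show ?thesis unfolding rev lo hd by simp
qed

lemma B2:
  assumes "even n"
  shows "(\<Sum>i\<in>{0..n}. of_nat (n choose i) * (-1)^(n div 2 + i)) = (if n = 0 then 1 else (0 :: complex))"
proof (cases "n = 0")
  case True then show ?thesis by simp
next
  case False
  have "(\<Sum>i\<in>{0..n}. of_nat (n choose i) * (-1)^(n div 2 + i)) = (-1)^(n div 2) * (\<Sum>i\<le>n. (-1)^i * (of_nat (n choose i) :: complex))"
    by (simp add: sum_distrib_left atLeast0AtMost power_add mult_ac)
  also have "\<dots> = 0" using choose_alternating_sum[of n] False by simp
  finally show ?thesis using False by simp
qed

lemma sign_fix:
  fixes h i :: nat
  shows "(if i \<le> h then (-1::complex) ^ (h - i) else - ((-1) ^ (i - h - 1))) = (-1) ^ (h + i)"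
proof (cases "i \<le> h")
  case True
  then have e: "h + i = (h - i) + 2 * i" by simp
  have "(-1::complex)^(h+i) = (-1)^(h-i)" unfolding e power_add power_mult by simp
  then show ?thesis using True by simp
next
  case False
  then have e: "h + i = (i - h - 1) + 1 + 2 * h" by simp
  have "(-1::complex)^(h+i) = - ((-1)^(i - h - 1))" unfolding e power_add power_mult by simp
  then show ?thesis using False by simp
qed

lemma regroup:
  fixes m :: nat and f :: "nat set \<Rightarrow> complex"
  shows "(\<Sum>l = 0..m div 2. of_nat ((2*l) choose l) * (\<Sum>S | S \<subseteq> {1..m} \<and> card S = m - 2*l. f S))
       = (\<Sum>S\<in>Pow {1..m}. if even (m - card S) then of_nat ((m - card S) choose ((m - card S) div 2)) * f S else 0)"
proof -
  have "(\<Sum>S\<in>Pow {1..m}. if even (m - card S) then of_nat ((m - card S) choose ((m - card S) div 2)) * f S else 0)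
      = (\<Sum>S\<in>Pow {1..m}. \<Sum>l\<in>{0..m div 2}. if l = (m - card S) div 2 then (if card S = m - 2 * l then of_nat ((2*l) choose l) * f S else 0) else 0)"
  proof (rule sum.cong[OF refl])
    fix S assume S: "S \<in> Pow {1..m}"
    have l: "(m - card S) div 2 \<in> {0..m div 2}" by (auto intro: div_le_mono)
    have c: "card S \<le> m" using S card_mono[of "{1..m}" S] by auto
    show "(if even (m - card S) then of_nat ((m - card S) choose ((m - card S) div 2)) * f S else 0)
        = (\<Sum>l\<in>{0..m div 2}. if l = (m - card S) div 2 then (if card S = m - 2 * l then of_nat ((2*l) choose l) * f S else 0) else 0)"
    proof (cases "even (m - card S)")
      case True
      then have "card S = m - 2 * ((m - card S) div 2)" "2 * ((m - card S) div 2) = m - card S" using c by auto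
      then show ?thesis using l True by (simp add: sum.delta)
    next
      case False
      then have "card S \<noteq> m - 2 * ((m - card S) div 2)" using c by presburger
      then show ?thesis using l False by (simp add: sum.delta)
    qed
  qed
  also have "\<dots> = (\<Sum>l\<in>{0..m div 2}. \<Sum>S\<in>Pow {1..m}. if l = (m - card S) div 2 then (if card S = m - 2 * l then of_nat ((2*l) choose l) * f S else 0) else 0)"
    by (rule sum.swap)
  also have "\<dots> = (\<Sum>l = 0..m div 2. of_nat ((2*l) choose l) * (\<Sum>S | S \<subseteq> {1..m} \<and> card S = m - 2*l. f S))"
  proof (rule sum.cong[OF refl])
    fix l assume l: "l \<in> {0..m div 2}"
    have "(\<Sum>S\<in>Pow {1..m}. if l = (m - card S) div 2 then (if card S = m - 2 * l then of_nat ((2*l) choose l) * f S else 0) else 0)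
        = (\<Sum>S\<in>Pow {1..m}. if card S = m - 2 * l then of_nat ((2*l) choose l) * f S else 0)"
    proof (rule sum.cong[OF refl])
      fix S assume S: "S \<in> Pow {1..m}"
      have "card S = m - 2 * l \<Longrightarrow> l = (m - card S) div 2" using l by auto
      then show "(if l = (m - card S) div 2 then (if card S = m - 2 * l then of_nat ((2*l) choose l) * f S else 0) else 0)
          = (if card S = m - 2 * l then of_nat ((2*l) choose l) * f S else (0::complex))" by auto
    qed
    also have "\<dots> = (\<Sum>S\<in>{S \<in> Pow {1..m}. card S = m - 2 * l}. of_nat ((2*l) choose l) * f S)"
      by (rule sum.inter_filter[symmetric]) simp
    also have "{S \<in> Pow {1..m}. card S = m - 2 * l} = {S. S \<subseteq> {1..m} \<and> card S = m - 2 * l}" by auto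
    finally show "(\<Sum>S\<in>Pow {1..m}. if l = (m - card S) div 2 then (if card S = m - 2 * l then of_nat ((2*l) choose l) * f S else 0) else 0)
        = of_nat ((2*l) choose l) * (\<Sum>S | S \<subseteq> {1..m} \<and> card S = m - 2*l. f S)"
      by (simp add: sum_distrib_left)
  qed
  finally show ?thesis by simp
qed

lemma sum_Q0: "(\<Sum>q\<in>Q0 m. F q) = (\<Sum>S\<in>Pow {1..m}. \<Sum>i\<in>{0..m - card S}. F (S, i))"
  unfolding Q0_def by (subst sum.Sigma) auto

lemma tt_bounds:
  assumes "q \<in> Q0 m"
  shows "1 - int m \<le> tt m q" "q \<noteq> ({}, 0) \<Longrightarrow> tt m q \<le> int m"
proof -
  obtain S i where q: "q = (S, i)" "S \<subseteq> {1..m}" "i \<le> m - card S" using assms unfolding Q0_def by auto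
  have c: "card S \<le> m" using q(2) card_mono[of "{1..m}" S] by auto
  show "1 - int m \<le> tt m q" using q c by (simp add: tt_def)
  assume ne: "q \<noteq> ({}, 0)"
  show "tt m q \<le> int m"
  proof (cases "S = {}")
    case True
    then have "i \<ge> 1" using ne q by auto
    then show ?thesis using q True by (simp add: tt_def)
  next
    case False
    then have "card S \<ge> 1" using q(2) finite_subset[of S "{1..m}"] by (simp add: Suc_le_eq card_gt_0_iff)
    then show ?thesis using q c by (simp add: tt_def)
  qed
qed

lemma q0_facts: "({}, 0) \<in> Q0 m" "tt m ({}, 0) = int (m + 1)" "wt x m ({}, 0) = 1"
  by (auto simp: Q0_def tt_def wt_def)

lemma char_k:
  assumes k: "1 \<le> k" "k \<le> m" and x: "\<forall>j\<in>{1..m}. x j \<noteq> 0"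
  shows "alt m (rowk x m k) = (-1)^k * alt m (rowk x m 0) * (\<Sum>q\<in>Q0 m. wt x m q * dl (tt m q) (int (m + 1 - k)))"
proof -
  define q0 where "q0 = ({}::nat set, 0::nat)"
  define Q where "Q = Q0 m - {q0}"
  have q0: "q0 \<in> Q0 m" unfolding q0_def by (rule q0_facts)
  have fQ: "finite Q" using finite_Q0 unfolding Q_def by simp
  have row: "rowk x m k 1 j = (\<Sum>q\<in>Q. (- wt x m q) * fz (x j) (tt m q))" if j: "j \<in> {1..m}" for j
  proof -
    have "0 = (\<Sum>q\<in>Q0 m. wt x m q * fz (x j) (tt m q))" using rel[OF j] x j by simp
    also have "\<dots> = wt x m q0 * fz (x j) (tt m q0) + (\<Sum>q\<in>Q. wt x m q * fz (x j) (tt m q))"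
      unfolding Q_def by (rule sum.remove[OF finite_Q0 q0])
    also have "wt x m q0 * fz (x j) (tt m q0) = rowk x m k 1 j"
      using k unfolding q0_def q0_facts fz_nat by (simp add: rowk_def one_pow_def)
    finally have "rowk x m k 1 j + (\<Sum>q\<in>Q. wt x m q * fz (x j) (tt m q)) = 0" by simp
    then show ?thesis by (simp add: sum_negf eq_neg_iff_add_eq_0)
  qed
  have "alt m (rowk x m k) = (\<Sum>q\<in>Q. (- wt x m q) * alt m ((rowk x m k)(1 := (\<lambda>j. fz (x j) (tt m q)))))"
    by (rule alt_linear[OF fQ]) (use k row in auto)
  also have "\<dots> = (\<Sum>q\<in>Q. (- wt x m q) * (dl (tt m q) (int (m + 1 - k)) * (-1)^(k-1) * alt m (rowk x m 0)))"
  proof (rule sum.cong[OF refl])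
    fix q assume q: "q \<in> Q"
    then have "\<bar>tt m q\<bar> \<le> int m" using tt_bounds[of q m] unfolding Q_def q0_def by auto
    then show "(- wt x m q) * alt m ((rowk x m k)(1 := (\<lambda>j. fz (x j) (tt m q)))) = (- wt x m q) * (dl (tt m q) (int (m + 1 - k)) * (-1)^(k-1) * alt m (rowk x m 0))"
      using A3[OF k] by simp
  qed
  also have "\<dots> = (-1)^k * alt m (rowk x m 0) * (\<Sum>q\<in>Q. wt x m q * dl (tt m q) (int (m + 1 - k)))"
  proof -
    have s: "(-1::complex)^k = - ((-1)^(k-1))" using k by (cases k) auto
    show ?thesis unfolding sum_distrib_left s by (rule sum.cong) (simp_all add: algebra_simps)
  qed
  also have "(\<Sum>q\<in>Q. wt x m q * dl (tt m q) (int (m + 1 - k))) = (\<Sum>q\<in>Q0 m. wt x m q * dl (tt m q) (int (m + 1 - k)))"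
  proof -
    have "dl (tt m q0) (int (m + 1 - k)) = 0" using k unfolding q0_def q0_facts by (simp add: dl_def)
    then show ?thesis unfolding Q_def using sum.remove[OF finite_Q0 q0, of "\<lambda>q. wt x m q * dl (tt m q) (int (m + 1 - k))"] by simp
  qed
  finally show ?thesis .
qed

lemma char_0: "(\<Sum>q\<in>Q0 m. wt x m q * dl (tt m q) (int (m + 1))) = 1"
proof -
  define q0 where "q0 = ({}::nat set, 0::nat)"
  have q0: "q0 \<in> Q0 m" unfolding q0_def by (rule q0_facts)
  have "(\<Sum>q\<in>Q0 m - {q0}. wt x m q * dl (tt m q) (int (m + 1))) = 0"
  proof (rule sum.neutral, rule ballI)
    fix q assume q: "q \<in> Q0 m - {q0}"
    then have "tt m q \<le> int m" "1 - int m \<le> tt m q" using tt_bounds[of q m] unfolding q0_def by auto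
    then show "wt x m q * dl (tt m q) (int (m + 1)) = 0" by (simp add: dl_def)
  qed
  moreover have "wt x m q0 * dl (tt m q0) (int (m + 1)) = 1" unfolding q0_def q0_facts by (simp add: dl_def)
  ultimately show ?thesis using sum.remove[OF finite_Q0 q0, of "\<lambda>q. wt x m q * dl (tt m q) (int (m + 1))"] by simp
qed

lemma spchar:
  assumes k: "k \<le> m" and x: "\<forall>j\<in>{1..m}. x j \<noteq> 0" and D: "sp_weyl_num m (\<lambda>_. 0) x \<noteq> 0"
  shows "sp_char m (one_pow k) x = (-1)^k * (\<Sum>q\<in>Q0 m. wt x m q * dl (tt m q) (int (m + 1 - k)))"
proof (cases "k = 0")
  case True
  then show ?thesis using D char_0[of x m] unfolding sp_char_def weyl_alt0 weyl_alt by simp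
next
  case False
  then have "1 \<le> k" by simp
  then show ?thesis using D unfolding sp_char_def weyl_alt0 weyl_alt char_k[OF \<open>1 \<le> k\<close> k x] by simp
qed

lemma sign_prod:
  assumes "S \<subseteq> {1..m}" "even (m - card S)"
  shows "(-1)^m * (\<Prod>l\<in>S. - yv x l) = (\<Prod>l\<in>S. x l + inverse (x l))"
proof -
  have c: "card S \<le> m" using assms(1) card_mono[of "{1..m}" S] by auto
  have e: "m + card S = (m - card S) + 2 * card S" using c by simp
  have "(-1::complex)^m * (-1)^card S = 1"
    unfolding power_add[symmetric] e using assms(2) by (simp add: power_add power_mult)
  then show ?thesis unfolding prod_uminus yv_def by (metis mult.assoc mult_1)
qed

lemma inner1:
  assumes S: "S \<in> Pow {1..m}"
  shows "(\<Sum>i\<in>{0..m - card S}. wt x m (S,i) * (\<Sum>j\<in>{0..m div 2}. dl (tt m (S,i)) (2 * int j + 1)))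
       = (\<Prod>l\<in>S. - yv x l) * (if even (m - card S) then of_nat ((m - card S) choose ((m - card S) div 2)) else 0)"
proof -
  let ?n = "m - card S"
  have "(\<Sum>i\<in>{0..?n}. wt x m (S,i) * (\<Sum>j\<in>{0..m div 2}. dl (tt m (S,i)) (2 * int j + 1)))
      = (\<Sum>i\<in>{0..?n}. (\<Prod>l\<in>S. - yv x l) * (of_nat (?n choose i) * (if even ?n then (if i \<le> ?n div 2 then 1 else -1) else 0)))"
  proof (rule sum.cong[OF refl])
    fix i assume i: "i \<in> {0..?n}"
    have "(\<Sum>j\<in>{0..m div 2}. dl (tt m (S,i)) (2 * int j + 1)) = (\<Sum>j\<in>{0..m div 2}. (\<lambda>_. 1::complex) j * dl (int ?n + 1 - 2 * int i) (2 * int j + 1))"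
      by (simp add: tt_def)
    also have "\<dots> = (if even ?n then (if i \<le> ?n div 2 then 1 else -1) else 0)"
      by (subst Jsum) (use i in auto)
    finally show "wt x m (S,i) * (\<Sum>j\<in>{0..m div 2}. dl (tt m (S,i)) (2 * int j + 1)) = (\<Prod>l\<in>S. - yv x l) * (of_nat (?n choose i) * (if even ?n then (if i \<le> ?n div 2 then 1 else -1) else 0))"
      by (simp add: wt_def)
  qed
  also have "\<dots> = (\<Prod>l\<in>S. - yv x l) * (if even ?n then of_nat (?n choose (?n div 2)) else 0)"
  proof (cases "even ?n")
    case True
    then show ?thesis using B1[OF True] by (simp add: sum_distrib_left[symmetric])
  next
    case False
    then show ?thesis by simp
  qed
  finally show ?thesis .
qed

lemma inner2:
  assumes S: "S \<in> Pow {1..m}"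
  shows "(\<Sum>i\<in>{0..m - card S}. wt x m (S,i) * (\<Sum>j\<in>{0..m div 2}. (-1)^j * dl (tt m (S,i)) (2 * int j + 1)))
       = (\<Prod>l\<in>S. - yv x l) * (if m - card S = 0 then 1 else 0)"
proof -
  let ?n = "m - card S"
  have "(\<Sum>i\<in>{0..?n}. wt x m (S,i) * (\<Sum>j\<in>{0..m div 2}. (-1)^j * dl (tt m (S,i)) (2 * int j + 1)))
      = (\<Sum>i\<in>{0..?n}. (\<Prod>l\<in>S. - yv x l) * (of_nat (?n choose i) * (if even ?n then (-1)^(?n div 2 + i) else 0)))"
  proof (rule sum.cong[OF refl])
    fix i assume i: "i \<in> {0..?n}"
    have "(\<Sum>j\<in>{0..m div 2}. (-1)^j * dl (tt m (S,i)) (2 * int j + 1)) = (\<Sum>j\<in>{0..m div 2}. (\<lambda>j. (-1::complex)^j) j * dl (int ?n + 1 - 2 * int i) (2 * int j + 1))"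
      by (simp add: tt_def)
    also have "\<dots> = (if even ?n then (if i \<le> ?n div 2 then (-1)^(?n div 2 - i) else - ((-1)^(i - ?n div 2 - 1))) else 0)"
      by (subst Jsum) (use i in auto)
    also have "\<dots> = (if even ?n then (-1)^(?n div 2 + i) else 0)"
      using sign_fix[of i "?n div 2"] by simp
    finally show "wt x m (S,i) * (\<Sum>j\<in>{0..m div 2}. (-1)^j * dl (tt m (S,i)) (2 * int j + 1)) = (\<Prod>l\<in>S. - yv x l) * (of_nat (?n choose i) * (if even ?n then (-1)^(?n div 2 + i) else 0))"
      by (simp add: wt_def)
  qed
  also have "\<dots> = (\<Prod>l\<in>S. - yv x l) * (if ?n = 0 then 1 else 0)"
  proof (cases "even ?n")
    case True
    then show ?thesis using B2[OF True] by (simp add: sum_distrib_left[symmetric])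
  next
    case False
    then have "?n \<noteq> 0" by auto
    then show ?thesis using False by simp
  qed
  finally show ?thesis .
qed

theorem mainTheorem3:
  fixes m :: nat and x :: "nat \<Rightarrow> complex"
  assumes "m \<ge> 1"
    and "\<forall>i\<in>{1..m}. x i \<noteq> 0"
    and "sp_weyl_num m (\<lambda>_. 0) x \<noteq> 0"
  shows "((\<Sum>l = 0..m div 2. of_nat ((2*l) choose l) *
            (\<Sum>S | S \<subseteq> {1..m} \<and> card S = m - 2*l. \<Prod>i\<in>S. (x i + inverse (x i))))
         = (\<Sum>j = 0..m div 2. sp_char m (one_pow (m - 2*j)) x))
         \<and> ((\<Prod>i = 1..m. (x i + inverse (x i)))
         = (\<Sum>j = 0..m div 2. (-1)^j * sp_char m (one_pow (m - 2*j)) x))"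
proof -
  have ch: "sp_char m (one_pow (m - 2*j)) x = (-1)^m * (\<Sum>q\<in>Q0 m. wt x m q * dl (tt m q) (2 * int j + 1))"
    if j: "j \<in> {0..m div 2}" for j
  proof -
    have jm: "2 * j \<le> m" using j by auto
    have e1: "(-1::complex)^(m - 2*j) = (-1)^m"
    proof -
      have "m = (m - 2*j) + 2*j" using jm by simp
      then have "(-1::complex)^m = (-1)^(m - 2*j) * ((-1)^2)^j" by (metis power_add power_mult)
      then show ?thesis by simp
    qed
    have e2: "int (m + 1 - (m - 2*j)) = 2 * int j + 1" using jm by simp
    show ?thesis using spchar[of "m - 2*j" m x, OF _ assms(2,3)] e1 e2 by (simp add: add.commute)
  qed
  have P1: "(\<Sum>j = 0..m div 2. sp_char m (one_pow (m - 2*j)) x)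
     = (\<Sum>S\<in>Pow {1..m}. if even (m - card S) then of_nat ((m - card S) choose ((m - card S) div 2)) * (\<Prod>l\<in>S. x l + inverse (x l)) else 0)"
  proof -
    have "(\<Sum>j = 0..m div 2. sp_char m (one_pow (m - 2*j)) x)
        = (\<Sum>j = 0..m div 2. (-1)^m * (\<Sum>q\<in>Q0 m. wt x m q * dl (tt m q) (2 * int j + 1)))"
      by (rule sum.cong[OF refl]) (rule ch)
    also have "\<dots> = (-1)^m * (\<Sum>q\<in>Q0 m. wt x m q * (\<Sum>j = 0..m div 2. dl (tt m q) (2 * int j + 1)))"
      unfolding sum_distrib_left[symmetric] by (subst sum.swap) (simp add: sum_distrib_left)
    also have "\<dots> = (-1)^m * (\<Sum>S\<in>Pow {1..m}. (\<Prod>l\<in>S. - yv x l) * (if even (m - card S) then of_nat ((m - card S) choose ((m - card S) div 2)) else 0))"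
      unfolding sum_Q0 by (simp add: inner1)
    also have "\<dots> = (\<Sum>S\<in>Pow {1..m}. if even (m - card S) then of_nat ((m - card S) choose ((m - card S) div 2)) * (\<Prod>l\<in>S. x l + inverse (x l)) else 0)"
      unfolding sum_distrib_left
    proof (rule sum.cong[OF refl])
      fix S assume S: "S \<in> Pow {1..m}"
      show "(-1)^m * ((\<Prod>l\<in>S. - yv x l) * (if even (m - card S) then of_nat ((m - card S) choose ((m - card S) div 2)) else 0))
          = (if even (m - card S) then of_nat ((m - card S) choose ((m - card S) div 2)) * (\<Prod>l\<in>S. x l + inverse (x l)) else 0)"
        using sign_prod[of S m x] S by (auto simp: mult_ac)
    qed
    finally show ?thesis .
  qed
  have P2: "(\<Sum>j = 0..m div 2. (-1)^j * sp_char m (one_pow (m - 2*j)) x) = (\<Prod>i = 1..m. (x i + inverse (x i)))"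
  proof -
    have "(\<Sum>j = 0..m div 2. (-1)^j * sp_char m (one_pow (m - 2*j)) x)
        = (\<Sum>j = 0..m div 2. (-1)^j * ((-1)^m * (\<Sum>q\<in>Q0 m. wt x m q * dl (tt m q) (2 * int j + 1))))"
      by (rule sum.cong[OF refl]) (simp add: ch)
    also have "\<dots> = (-1)^m * (\<Sum>q\<in>Q0 m. wt x m q * (\<Sum>j = 0..m div 2. (-1)^j * dl (tt m q) (2 * int j + 1)))"
      unfolding sum_distrib_left by (subst sum.swap) (simp add: sum_distrib_left mult_ac)
    also have "\<dots> = (-1)^m * (\<Sum>S\<in>Pow {1..m}. (\<Prod>l\<in>S. - yv x l) * (if m - card S = 0 then 1 else 0))"
      unfolding sum_Q0 by (simp add: inner2)
    also have "(\<Sum>S\<in>Pow {1..m}. (\<Prod>l\<in>S. - yv x l) * (if m - card S = 0 then 1 else 0))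
        = (\<Sum>S\<in>Pow {1..m}. if S = {1..m} then (\<Prod>l\<in>S. - yv x l) else 0)"
    proof (rule sum.cong[OF refl])
      fix S assume S: "S \<in> Pow {1..m}"
      have "m - card S = 0 \<longleftrightarrow> S = {1..m}"
      proof
        assume "m - card S = 0"
        then have "card {1..m} \<le> card S" by simp
        then show "S = {1..m}" using S card_seteq[of "{1..m}" S] by auto
      qed simp
      then show "(\<Prod>l\<in>S. - yv x l) * (if m - card S = 0 then 1 else 0) = (if S = {1..m} then (\<Prod>l\<in>S. - yv x l) else 0)"
        by simp
    qed
    also have "\<dots> = (\<Prod>l\<in>{1..m}. - yv x l)" by (simp add: sum.delta)
    finally show ?thesis using sign_prod[of "{1..m}" m x] by simp
  qed
  show ?thesis using P1 P2 regroup[where m=m and f="\<lambda>S. \<Prod>i\<in>S. (x i + inverse (x i))"] by simp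
qed

end
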